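(* Let $\mathbf{K}$ be an algebraically closed field and let $f,g\in\mathrm{Aut}(\mathbb G_m^2)$ be two loxodromic automorphisms of the algebraic torus $\mathbb G_m^2$ over $\mathbf{K}$. Then $\mathrm{Per}(f)\cap\mathrm{Per}(g)\neq\emptyset$ if and only if $\mathrm{Per}(f)=\mathrm{Per}(g)$.
   Context: Every $\mathbf{K}$-automorphism of $\mathbb G_m^2$ has the form $(x,y)\mapsto(\alpha x^ay^b,\beta x^cy^d)$ with $\alpha,\beta\in\mathbf{K}^\times$ and $\begin{pmatrix}a&b\\c&d\end{pmatrix}\in\mathrm{GL}_2(\mathbf Z)$. An automorphism is loxodromic if its first dynamical degree $\lambda_1(f)=\lim_N((f^N)^*H\cdot H)^{1/N}$ (for $H$ ample on a projective completion) is $>1$. $\mathrm{Per}(f)$ is the set of periodic points of $f$. *)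

theory Defs
  imports Complex_Main "HOL-Computational_Algebra.Polynomial"
begin

definition torus :: "('k::field \<times> 'k) set" where
  "torus = {(x, y). x \<noteq> 0 \<and> y \<noteq> 0}"

text \<open>Integer 2x2 matrices as quadruples (a,b,c,d) = [[a,b],[c,d]].\<close>
type_synonym imat2 = "int \<times> int \<times> int \<times> int"

definition imat2_det :: "imat2 \<Rightarrow> int" where
  "imat2_det M = (case M of (a, b, c, d) \<Rightarrow> a * d - b * c)"

definition imat2_mult :: "imat2 \<Rightarrow> imat2 \<Rightarrow> imat2" where
  "imat2_mult M M' = (case M of (a, b, c, d) \<Rightarrow> case M' of (a', b', c', d') \<Rightarrow>
     (a * a' + b * c', a * b' + b * d', c * a' + d * c', c * b' + d * d'))"

definition imat2_pow :: "imat2 \<Rightarrow> nat \<Rightarrow> imat2" where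
  "imat2_pow M n = ((imat2_mult M) ^^ n) (1, 0, 0, 1)"

definition tmap :: "'k::field \<Rightarrow> 'k \<Rightarrow> imat2 \<Rightarrow> 'k \<times> 'k \<Rightarrow> 'k \<times> 'k" where
  "tmap \<alpha> \<beta> M p = (case M of (a, b, c, d) \<Rightarrow> case p of (x, y) \<Rightarrow>
     (\<alpha> * x powi a * y powi b, \<beta> * x powi c * y powi d))"

definition is_torus_aut :: "'k::field \<Rightarrow> 'k \<Rightarrow> imat2 \<Rightarrow> bool" where
  "is_torus_aut \<alpha> \<beta> M \<longleftrightarrow> \<alpha> \<noteq> 0 \<and> \<beta> \<noteq> 0 \<and> \<bar>imat2_det M\<bar> = 1"

definition Per :: "('k::field \<times> 'k \<Rightarrow> 'k \<times> 'k) \<Rightarrow> ('k \<times> 'k) set" where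
  "Per f = {p \<in> torus. \<exists>n::nat. n \<ge> 1 \<and> (f ^^ n) p = p}"

text \<open>Degree of a monomial map with exponent matrix M, viewed as a rational
  self-map of P^2 \<supseteq> G_m^2; equals (f^* H \<cdot> H) for H a line in P^2.
  Homogenising (1, x^a y^b, x^c y^d) gives exponent vectors
  (0,0,0), (-a-b,a,b), (-c-d,c,d); clearing denominators gives this degree.\<close>
definition mono_deg :: "imat2 \<Rightarrow> int" where
  "mono_deg M = (case M of (a, b, c, d) \<Rightarrow>
     max 0 (max (a + b) (c + d)) - min 0 (min a c) - min 0 (min b d))"

text \<open>First dynamical degree: lim_N ((f^N)^* H \<cdot> H)^(1/N); f^N is monomial with matrix M^N.\<close>
definition lambda1 :: "imat2 \<Rightarrow> real" where
  "lambda1 M = lim (\<lambda>N. real_of_int (mono_deg (imat2_pow M N)) powr (1 / real N))"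

definition loxodromic :: "imat2 \<Rightarrow> bool" where
  "loxodromic M \<longleftrightarrow> lambda1 M > 1"

end

theory Submission
  imports Defs "HOL-Real_Asymp.Real_Asymp"
begin


fun cheb :: "int \<Rightarrow> int \<Rightarrow> nat \<Rightarrow> int" where
  "cheb t e 0 = 0"
| "cheb t e (Suc 0) = 1"
| "cheb t e (Suc (Suc n)) = t * cheb t e (Suc n) - e * cheb t e n"

definition tr2 :: "imat2 \<Rightarrow> int" where
  "tr2 M = (case M of (a, b, c, d) \<Rightarrow> a + d)"

lemma pow_0[simp]: "imat2_pow M 0 = (1,0,0,1)"
  by (simp add: imat2_pow_def)

lemma pow_Suc: "imat2_pow M (Suc n) = imat2_mult M (imat2_pow M n)"
  by (simp add: imat2_pow_def)

lemma mult_assoc: "imat2_mult (imat2_mult A B) C = imat2_mult A (imat2_mult B C)"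
  by (cases A; cases B; cases C) (simp add: imat2_mult_def algebra_simps)

lemma mult_id_left[simp]: "imat2_mult (1,0,0,1) A = A"
  by (cases A) (simp add: imat2_mult_def)

lemma mult_id_right[simp]: "imat2_mult A (1,0,0,1) = A"
  by (cases A) (simp add: imat2_mult_def)

lemma pow_add: "imat2_pow M (m + n) = imat2_mult (imat2_pow M m) (imat2_pow M n)"
  by (induction m) (simp_all add: pow_Suc mult_assoc)

lemma pow_mult: "imat2_pow M (m * n) = imat2_pow (imat2_pow M m) n"
  by (induction n) (simp_all add: pow_Suc pow_add)

lemma det_mult: "imat2_det (imat2_mult A B) = imat2_det A * imat2_det B"
  by (cases A; cases B) (simp add: imat2_mult_def imat2_det_def algebra_simps)

lemma det_pow: "imat2_det (imat2_pow M n) = imat2_det M ^ n"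
proof (induction n)
  case 0 then show ?case by (simp add: imat2_det_def)
next
  case (Suc n) then show ?case by (simp add: pow_Suc det_mult)
qed

lemma pow_cheb:
  assumes "M = (a,b,c,d)" and "t = a + d" and "e = a*d - b*c"
  shows "imat2_pow M (Suc n) = (cheb t e (Suc n) * a - e * cheb t e n, cheb t e (Suc n) * b,
      cheb t e (Suc n) * c, cheb t e (Suc n) * d - e * cheb t e n)"
proof (induction n)
  case 0
  then show ?case using assms by (simp add: pow_Suc)
next
  case (Suc n)
  show ?case
    unfolding pow_Suc[of M "Suc n"] Suc[unfolded pow_Suc[of M n]] pow_Suc[of M n] cheb.simps
    using assms(1) by (simp add: assms(2,3) imat2_mult_def algebra_simps)
qed

lemma cheb_grow:
  assumes "t \<ge> 3"
  shows "0 \<le> cheb t 1 n \<and> cheb t 1 n < cheb t 1 (Suc n)"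
proof (induction n)
  case 0 then show ?case by simp
next
  case (Suc n)
  have "t * cheb t 1 (Suc n) \<ge> 3 * cheb t 1 (Suc n)"
    using Suc assms by (intro mult_right_mono) auto
  moreover have "cheb t 1 (Suc (Suc n)) = t * cheb t 1 (Suc n) - cheb t 1 n" by simp
  ultimately show ?case using Suc.IH by linarith
qed

lemma det_minus_id:
  assumes "X = (a,b,c,d)"
  shows "imat2_det (a - 1, b, c, d - 1) = imat2_det X - tr2 X + 1"
  using assms by (simp add: imat2_det_def tr2_def algebra_simps)

lemma nonsing_pow:
  assumes det1: "imat2_det N = 1" and tr3: "tr2 N \<ge> 3" and k: "k \<ge> 1"
  shows "\<forall>a b c d. imat2_pow N k = (a,b,c,d) \<longrightarrow> (a - 1) * (d - 1) - b * c \<noteq> 0"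
proof (intro allI impI)
  fix a b c d assume X: "imat2_pow N k = (a,b,c,d)"
  obtain n where kn: "k = Suc n" using k by (cases k) auto
  obtain a0 b0 c0 d0 where N: "N = (a0,b0,c0,d0)" by (cases N) auto
  define t where "t = a0 + d0"
  have e: "a0 * d0 - b0 * c0 = 1" using det1 N by (simp add: imat2_det_def)
  have t3: "t \<ge> 3" using tr3 N by (simp add: tr2_def t_def)
  have P: "imat2_pow N (Suc n) = (cheb t 1 (Suc n) * a0 - cheb t 1 n, cheb t 1 (Suc n) * b0,
      cheb t 1 (Suc n) * c0, cheb t 1 (Suc n) * d0 - cheb t 1 n)"
    using pow_cheb[OF N t_def, of 1 n] e by simp
  have dX: "a * d - b * c = 1" using det_pow[of N k] det1 X by (simp add: imat2_det_def)
  have trX: "a + d = t * cheb t 1 (Suc n) - 2 * cheb t 1 n"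
    using P X kn by (simp add: t_def algebra_simps)
  have g: "0 \<le> cheb t 1 n" "cheb t 1 n < cheb t 1 (Suc n)" using cheb_grow[OF t3, of n] by auto
  have "t * cheb t 1 (Suc n) \<ge> 3 * cheb t 1 (Suc n)"
    using g t3 by (intro mult_right_mono) auto
  then have "a + d \<ge> 3" using trX g by linarith
  then show "(a - 1) * (d - 1) - b * c \<noteq> 0" using dX by (simp add: algebra_simps)
qed



lemma test_lim:
  assumes "C > 0"
  shows "(\<lambda>n::nat. (C * real n) powr (1 / real n)) \<longlonglongrightarrow> 1"
  using assms by real_asymp

lemma cheb_2: "t = 2 \<Longrightarrow> e = 1 \<Longrightarrow> cheb t e n = int n"
  by (induction t e n rule: cheb.induct) auto

lemma cheb_m2: "t = -2 \<Longrightarrow> e = 1 \<Longrightarrow> cheb t e n = (-1)^(Suc n) * int n"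
  by (induction t e n rule: cheb.induct) (auto simp: algebra_simps)

lemma per_bound:
  assumes k0: "k > 0" and sh: "\<And>n. \<bar>cheb t e (n + k)\<bar> = \<bar>cheb t e n\<bar>" and sm: "\<And>n. n < k \<Longrightarrow> \<bar>cheb t e n\<bar> \<le> 1"
  shows "\<bar>cheb t e n\<bar> \<le> 1"
proof (induction n rule: less_induct)
  case (less n)
  show ?case
  proof (cases "n < k")
    case True then show ?thesis using sm by auto
  next
    case False
    then obtain m where m: "n = m + k" by (metis add.commute le_add_diff_inverse not_less)
    have "m < n" using m k0 by simp
    then show ?thesis using less.IH[of m] sh[of m] m by simp
  qed
qed

lemma cheb_lin:
  assumes "(e = 1 \<and> -2 \<le> t \<and> t \<le> 2) \<or> (e = -1 \<and> t = 0)"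
  shows "\<bar>cheb t e n\<bar> \<le> int n"
proof -
  have small: "\<bar>cheb t e n\<bar> \<le> 1 \<Longrightarrow> \<bar>cheb t e n\<bar> \<le> int n"
    by (cases n) auto
  consider "e = 1" "t = 2" | "e = 1" "t = -2" | "e = 1" "t = 1" | "e = 1" "t = 0" | "e = 1" "t = -1"
    | "e = -1" "t = 0" using assms by linarith
  then show ?thesis
  proof cases
    case 1 then show ?thesis using cheb_2 by simp
  next
    case 2 then show ?thesis using cheb_m2[of t e n] by (simp add: abs_mult)
  next
    case 3
    have "\<bar>cheb t e n\<bar> \<le> 1"
      by (rule per_bound[where k=3]) (use 3 in \<open>auto simp: numeral_3_eq_3 less_Suc_eq\<close>)
    then show ?thesis by (rule small)
  next
    case 4
    have "\<bar>cheb t e n\<bar> \<le> 1"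
      by (rule per_bound[where k=2]) (use 4 in \<open>auto simp: numeral_2_eq_2 less_Suc_eq\<close>)
    then show ?thesis by (rule small)
  next
    case 5
    have "\<bar>cheb t e n\<bar> \<le> 1"
      by (rule per_bound[where k=3]) (use 5 in \<open>auto simp: numeral_3_eq_3 less_Suc_eq\<close>)
    then show ?thesis by (rule small)
  next
    case 6
    have "\<bar>cheb t e n\<bar> \<le> 1"
      by (rule per_bound[where k=2]) (use 6 in \<open>auto simp: numeral_2_eq_2 less_Suc_eq\<close>)
    then show ?thesis by (rule small)
  qed
qed



lemma mono_deg_upper: "mono_deg (a,b,c,d) \<le> 2 * (\<bar>a\<bar> + \<bar>b\<bar> + \<bar>c\<bar> + \<bar>d\<bar>)"
proof -
  have "a + b \<le> \<bar>a\<bar> + \<bar>b\<bar> + \<bar>c\<bar> + \<bar>d\<bar>" "c + d \<le> \<bar>a\<bar> + \<bar>b\<bar> + \<bar>c\<bar> + \<bar>d\<bar>" by arith+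
  then have 1: "max 0 (max (a + b) (c + d)) \<le> \<bar>a\<bar> + \<bar>b\<bar> + \<bar>c\<bar> + \<bar>d\<bar>" by simp
  have 2: "- min 0 (min a c) \<le> \<bar>a\<bar> + \<bar>c\<bar>" by simp
  have 3: "- min 0 (min b d) \<le> \<bar>b\<bar> + \<bar>d\<bar>" by simp
  have "mono_deg (a,b,c,d) = max 0 (max (a + b) (c + d)) - min 0 (min a c) - min 0 (min b d)"
    by (simp add: mono_deg_def)
  moreover have "\<bar>a\<bar> + \<bar>c\<bar> + (\<bar>b\<bar> + \<bar>d\<bar>) = \<bar>a\<bar> + \<bar>b\<bar> + \<bar>c\<bar> + \<bar>d\<bar>" by simp
  moreover have "\<And>(m::int) X Y Z A B S. m = X - Y - Z \<Longrightarrow> X \<le> S \<Longrightarrow> - Y \<le> A \<Longrightarrow> - Z \<le> B \<Longrightarrow> A + B = S \<Longrightarrow> m \<le> 2 * S"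
    by linarith
  ultimately show ?thesis using 1 2 3 by blast
qed

lemma mono_deg_lower:
  assumes "a * d - b * c \<noteq> 0" shows "mono_deg (a,b,c,d) \<ge> 1"
proof (rule ccontr)
  assume "\<not> mono_deg (a,b,c,d) \<ge> 1"
  then have h: "max 0 (max (a + b) (c + d)) - min 0 (min a c) - min 0 (min b d) \<le> 0"
    unfolding mono_deg_def by simp
  have "0 \<le> max 0 (max (a + b) (c + d))" "min 0 (min a c) \<le> 0" "min 0 (min b d) \<le> 0" by auto
  then have "max 0 (max (a + b) (c + d)) \<le> 0" "0 \<le> min 0 (min a c)" "0 \<le> min 0 (min b d)"
    using h by linarith+
  then have "a \<ge> 0 \<and> b \<ge> 0 \<and> c \<ge> 0 \<and> d \<ge> 0 \<and> a + b \<le> 0"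
    by simp
  then have "a = 0 \<and> b = 0" by linarith
  then show False using assms by simp
qed

lemma entry_bd1:
  fixes p1 p0 e x :: int
  assumes "\<bar>p1\<bar> \<le> n" "\<bar>p0\<bar> \<le> n" "\<bar>e\<bar> = 1"
  shows "\<bar>p1 * x - e * p0\<bar> \<le> n * \<bar>x\<bar> + n"
proof -
  have "\<bar>p1 * x - e * p0\<bar> \<le> \<bar>p1\<bar> * \<bar>x\<bar> + \<bar>e\<bar> * \<bar>p0\<bar>"
    by (metis abs_mult abs_triangle_ineq4)
  moreover have "\<bar>p1\<bar> * \<bar>x\<bar> \<le> n * \<bar>x\<bar>" using assms by (intro mult_right_mono) auto
  ultimately show ?thesis using assms by simp
qed

lemma entry_bd2:
  fixes p1 x :: int
  assumes "\<bar>p1\<bar> \<le> n"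
  shows "\<bar>p1 * x\<bar> \<le> n * \<bar>x\<bar>"
  using assms by (simp add: abs_mult mult_right_mono)

lemma sq_le4: "(t::int) * t \<le> 4 \<Longrightarrow> -2 \<le> t \<and> t \<le> 2"
proof (rule ccontr)
  assume a: "t * t \<le> 4" "\<not> (-2 \<le> t \<and> t \<le> 2)"
  then have "\<bar>t\<bar> \<ge> 3" by linarith
  then have "\<bar>t\<bar> * \<bar>t\<bar> \<ge> 3 * 3" by (intro mult_mono) auto
  then show False using a(1) by (simp add: abs_mult[symmetric])
qed

lemma sq_le0: "(t::int) * t \<le> 0 \<Longrightarrow> t = 0"
proof -
  assume h: "t * t \<le> 0"
  have "0 \<le> t * t" by simp
  then have "t * t = 0" using h by linarith
  then show "t = 0" by simp
qed

lemma not_lox: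
  assumes det: "\<bar>imat2_det M\<bar> = 1" and tr: "tr2 (imat2_pow M 2) \<le> 2"
  shows "lambda1 M = 1"
proof -
  obtain a b c d where M: "M = (a,b,c,d)" by (cases M) auto
  define t where "t = a + d"
  define e where "e = a * d - b * c"
  have e1: "\<bar>e\<bar> = 1" using det M by (simp add: imat2_det_def e_def)
  have "imat2_pow M 2 = (a*a + b*c, a*b + b*d, c*a + d*c, c*b + d*d)"
    by (simp add: numeral_2_eq_2 pow_Suc M imat2_mult_def)
  then have "t * t - 2 * e \<le> 2" using tr by (simp add: tr2_def t_def e_def algebra_simps)
  then have cond: "(e = 1 \<and> -2 \<le> t \<and> t \<le> 2) \<or> (e = -1 \<and> t = 0)"
    using e1 sq_le4[of t] sq_le0[of t] by (cases "e = 1") auto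
  define K where "K = \<bar>a\<bar> + \<bar>b\<bar> + \<bar>c\<bar> + \<bar>d\<bar>"
  define C :: real where "C = 2 * (K + 2)"
  define D where "D n = real_of_int (mono_deg (imat2_pow M n))" for n
  have Dbd: "1 \<le> D n \<and> D n \<le> C * real n" if n: "n \<ge> 1" for n
  proof -
    obtain m where nm: "n = Suc m" using n by (cases n) auto
    define p1 where "p1 = cheb t e (Suc m)"
    define p0 where "p0 = cheb t e m"
    have P: "imat2_pow M n = (p1 * a - e * p0, p1 * b, p1 * c, p1 * d - e * p0)"
      using pow_cheb[OF M t_def e_def, of m] nm p1_def p0_def by simp
    have b1: "\<bar>p1\<bar> \<le> int n" using cheb_lin[OF cond, of "Suc m"] nm p1_def by simp
    have b0: "\<bar>p0\<bar> \<le> int n" using cheb_lin[OF cond, of m] nm p0_def by simp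
    have "mono_deg (imat2_pow M n) \<le> 2 * (\<bar>p1 * a - e * p0\<bar> + \<bar>p1 * b\<bar> + \<bar>p1 * c\<bar> + \<bar>p1 * d - e * p0\<bar>)"
      unfolding P by (rule mono_deg_upper)
    also have "\<dots> \<le> 2 * ((int n * \<bar>a\<bar> + int n) + int n * \<bar>b\<bar> + int n * \<bar>c\<bar> + (int n * \<bar>d\<bar> + int n))"
      apply (intro mult_left_mono add_mono)
      using entry_bd1[OF b1 b0 e1, of a] entry_bd1[OF b1 b0 e1, of d]
        entry_bd2[OF b1, of b] entry_bd2[OF b1, of c] by auto
    also have "\<dots> = 2 * (K + 2) * int n" by (simp add: K_def algebra_simps)
    finally have up: "mono_deg (imat2_pow M n) \<le> 2 * (K + 2) * int n" .
    have "imat2_det (imat2_pow M n) \<noteq> 0" using det_pow[of M n] det by auto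
    then have lo: "mono_deg (imat2_pow M n) \<ge> 1"
      using mono_deg_lower P by (simp add: imat2_det_def)
    have "D n \<le> real_of_int (2 * (K + 2) * int n)" unfolding D_def using up by linarith
    then show ?thesis using lo unfolding D_def C_def by simp
  qed
  have Cpos: "C > 0" unfolding C_def K_def by simp
  have lim1: "(\<lambda>n::nat. (C * real n) powr (1 / real n)) \<longlonglongrightarrow> 1"
    using Cpos by real_asymp
  have "(\<lambda>n. D n powr (1 / real n)) \<longlonglongrightarrow> 1"
  proof (rule tendsto_sandwich[OF _ _ tendsto_const lim1])
    show "\<forall>\<^sub>F n in sequentially. 1 \<le> D n powr (1 / real n)"
      using Dbd by (intro eventually_sequentiallyI[of 1]) (auto intro: ge_one_powr_ge_zero)
    show "\<forall>\<^sub>F n in sequentially. D n powr (1 / real n) \<le> (C * real n) powr (1 / real n)"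
    proof (intro eventually_sequentiallyI[of 1])
      fix n :: nat assume "n \<ge> 1"
      from Dbd[OF this] show "D n powr (1 / real n) \<le> (C * real n) powr (1 / real n)"
        by (intro powr_mono2) auto
    qed
  qed
  then show ?thesis unfolding lambda1_def D_def by (rule limI)
qed

lemma lox_tr:
  assumes "\<bar>imat2_det M\<bar> = 1" and "loxodromic M"
  shows "tr2 (imat2_pow M 2) \<ge> 3"
  using not_lox[OF assms(1)] assms(2) unfolding loxodromic_def by fastforce



definition tmul :: "'k::field \<times> 'k \<Rightarrow> 'k \<times> 'k \<Rightarrow> 'k \<times> 'k" where
  "tmul p q = (fst p * fst q, snd p * snd q)"

definition mon :: "imat2 \<Rightarrow> 'k::field \<times> 'k \<Rightarrow> 'k \<times> 'k" where
  "mon M p = tmap 1 1 M p"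

lemma pi_add: "(x::'k::field) \<noteq> 0 \<Longrightarrow> x powi i * x powi j = x powi (i + j)"
  by (simp add: power_int_add)

lemma pi_pi: "((x::'k::field) powi i) powi j = x powi (i * j)"
  by (simp add: power_int_mult)

lemma torus_iff[simp]: "(x, y) \<in> torus \<longleftrightarrow> x \<noteq> 0 \<and> y \<noteq> 0"
  by (simp add: torus_def)

lemma tmul_simp[simp]: "tmul (x, y) (u, v) = (x * u, y * v)"
  by (simp add: tmul_def)

lemma mon_simp: "mon (a,b,c,d) (x,y) = (x powi a * y powi b, x powi c * y powi d)"
  by (simp add: mon_def tmap_def)

lemma tmap_split: "tmap \<alpha> \<beta> M p = tmul (\<alpha>, \<beta>) (mon M p)"
  by (cases M; cases p) (simp add: mon_def tmap_def)

lemma mon_torus: "p \<in> torus \<Longrightarrow> mon M p \<in> torus"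
  by (cases M; cases p) (simp add: mon_simp)

lemma tmul_torus: "p \<in> torus \<Longrightarrow> q \<in> torus \<Longrightarrow> tmul p q \<in> torus"
  by (cases p; cases q) simp

lemma mon_mul: "mon M (tmul p q) = tmul (mon M p) (mon M q)"
  by (cases M; cases p; cases q) (simp add: mon_simp power_int_mult_distrib algebra_simps)

lemma mon_comp:
  assumes "p \<in> torus"
  shows "mon M (mon N p) = mon (imat2_mult M N) p"
proof -
  obtain a b c d where M: "M = (a,b,c,d)" by (cases M) auto
  obtain a' b' c' d' where N: "N = (a',b',c',d')" by (cases N) auto
  obtain x y where p: "p = (x,y)" by (cases p) auto
  have x: "x \<noteq> 0" and y: "y \<noteq> 0" using assms p by auto
  have "(x powi a' * y powi b') powi a * (x powi c' * y powi d') powi b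
      = (x powi (a' * a) * x powi (c' * b)) * (y powi (b' * a) * y powi (d' * b))"
    by (simp add: power_int_mult_distrib pi_pi algebra_simps)
  also have "\<dots> = x powi (a * a' + b * c') * y powi (a * b' + b * d')"
    using x y by (simp add: pi_add algebra_simps)
  finally have 1: "(x powi a' * y powi b') powi a * (x powi c' * y powi d') powi b
      = x powi (a * a' + b * c') * y powi (a * b' + b * d')" .
  have "(x powi a' * y powi b') powi c * (x powi c' * y powi d') powi d
      = (x powi (a' * c) * x powi (c' * d)) * (y powi (b' * c) * y powi (d' * d))"
    by (simp add: power_int_mult_distrib pi_pi algebra_simps)
  also have "\<dots> = x powi (c * a' + d * c') * y powi (c * b' + d * d')"
    using x y by (simp add: pi_add algebra_simps)
  finally have 2: "(x powi a' * y powi b') powi c * (x powi c' * y powi d') powi d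
      = x powi (c * a' + d * c') * y powi (c * b' + d * d')" .
  show ?thesis using 1 2 by (simp add: M N p mon_simp imat2_mult_def)
qed

lemma mon_id: "mon (1,0,0,1) p = p"
  by (cases p) (simp add: mon_simp)

lemma iterate:
  assumes "\<alpha> \<noteq> 0" "\<beta> \<noteq> 0"
  shows "\<exists>c\<in>torus. \<forall>p\<in>torus. (tmap \<alpha> \<beta> M ^^ n) p = tmul c (mon (imat2_pow M n) p)"
proof (induction n)
  case 0
  show ?case by (intro bexI[of _ "(1,1)"]) (auto simp: mon_id)
next
  case (Suc n)
  then obtain c where c: "c \<in> torus" "\<forall>p\<in>torus. (tmap \<alpha> \<beta> M ^^ n) p = tmul c (mon (imat2_pow M n) p)"
    by blast
  show ?case
  proof (intro bexI[of _ "tmul (\<alpha>, \<beta>) (mon M c)"] ballI)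
    show "tmul (\<alpha>, \<beta>) (mon M c) \<in> torus" using assms c by (intro tmul_torus mon_torus) auto
    fix p :: "'a \<times> 'a" assume p: "p \<in> torus"
    have "(tmap \<alpha> \<beta> M ^^ Suc n) p = tmul (\<alpha>, \<beta>) (mon M (tmul c (mon (imat2_pow M n) p)))"
      using c p by (simp add: tmap_split)
    also have "\<dots> = tmul (\<alpha>, \<beta>) (tmul (mon M c) (mon (imat2_pow M (Suc n)) p))"
      by (simp add: mon_mul mon_comp[OF p] pow_Suc)
    also have "\<dots> = tmul (tmul (\<alpha>, \<beta>) (mon M c)) (mon (imat2_pow M (Suc n)) p)"
      by (simp add: tmul_def algebra_simps)
    finally show "(tmap \<alpha> \<beta> M ^^ Suc n) p = tmul (tmul (\<alpha>, \<beta>) (mon M c)) (mon (imat2_pow M (Suc n)) p)" .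
  qed
qed



definition tors :: "('k::field \<times> 'k) set" where
  "tors = {z \<in> torus. \<exists>m::nat. m \<ge> 1 \<and> fst z ^ m = 1 \<and> snd z ^ m = 1}"

lemma tmul_assoc: "tmul c (tmul u v) = tmul (tmul c u) v"
  by (simp add: tmul_def algebra_simps)

lemma powi_one_imp: 
  fixes x :: "'k::field"
  assumes "x powi D = 1" shows "x ^ nat \<bar>D\<bar> = 1"
proof (cases "D \<ge> 0")
  case True then show ?thesis using assms by (simp add: power_int_def)
next
  case False
  then have "inverse x ^ nat (- D) = 1" using assms by (simp add: power_int_def)
  then have "inverse (x ^ nat (- D)) = 1" by (simp add: power_inverse)
  then show ?thesis using False by (simp add: inverse_eq_iff_eq)
qed

lemma tors_of_fixed:
  fixes z :: "'k::field \<times> 'k"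
  assumes z: "z \<in> torus" and hfix: "mon (a,b,c,d) z = z" and D: "(a - 1) * (d - 1) - b * c \<noteq> 0"
  shows "z \<in> tors"
proof -
  obtain x y where zxy: "z = (x,y)" by (cases z) auto
  have x: "x \<noteq> 0" and y: "y \<noteq> 0" using z zxy by auto
  have f1: "x powi a * y powi b = x" and f2: "x powi c * y powi d = y"
    using hfix zxy by (simp_all add: mon_simp)
  have e1: "x powi (a - 1) * y powi b = 1"
    using f1 x by (simp add: power_int_diff field_simps)
  have e2: "x powi c * y powi (d - 1) = 1"
    using f2 y by (simp add: power_int_diff field_simps)
  define E where "E = (a - 1) * (d - 1) - b * c"
  have "1 = (x powi (a - 1) * y powi b) powi (d - 1) / (x powi c * y powi (d - 1)) powi b"
    using e1 e2 by simp
  also have "\<dots> = (x powi ((a - 1) * (d - 1)) * y powi (b * (d - 1))) / (x powi (c * b) * y powi (b * (d - 1)))"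
    by (simp add: power_int_mult_distrib pi_pi algebra_simps)
  also have "\<dots> = x powi ((a - 1) * (d - 1)) / x powi (c * b)"
    using y by simp
  also have "\<dots> = x powi E"
    unfolding E_def mult.commute[of b c] using x by (rule power_int_diff[OF disjI1, symmetric])
  finally have xE: "x powi E = 1" by simp
  have "1 = (x powi c * y powi (d - 1)) powi (a - 1) / (x powi (a - 1) * y powi b) powi c"
    using e1 e2 by simp
  also have "\<dots> = (x powi (c * (a - 1)) * y powi ((a - 1) * (d - 1))) / (x powi (c * (a - 1)) * y powi (b * c))"
    by (simp add: power_int_mult_distrib pi_pi algebra_simps)
  also have "\<dots> = y powi ((a - 1) * (d - 1)) / y powi (b * c)"
    using x by simp
  also have "\<dots> = y powi E"
    unfolding E_def using y by (rule power_int_diff[OF disjI1, symmetric])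
  finally have yE: "y powi E = 1" by simp
  have "nat \<bar>E\<bar> \<ge> 1" using D E_def by simp
  then show ?thesis unfolding tors_def
    using powi_one_imp[OF xE] powi_one_imp[OF yE] z zxy by auto
qed

lemma mon_inj:
  fixes z1 z2 :: "'k::field \<times> 'k"
  assumes det: "\<bar>imat2_det C\<bar> = 1" and z: "z1 \<in> torus" "z2 \<in> torus"
    and eq: "mon C z1 = mon C z2"
  shows "z1 = z2"
proof -
  obtain a b c d where C: "C = (a,b,c,d)" by (cases C) auto
  define e where "e = a * d - b * c"
  have e1: "\<bar>e\<bar> = 1" using det C e_def by (simp add: imat2_det_def)
  have ee: "e * e = 1" using e1 abs_mult_self_eq[of e] by simp
  have adj: "imat2_mult (d, -b, -c, a) C = (e, 0, 0, e)"
    by (simp add: C imat2_mult_def e_def algebra_simps)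
  have "mon (d, -b, -c, a) (mon C z1) = mon (d, -b, -c, a) (mon C z2)" using eq by simp
  then have "mon (e,0,0,e) z1 = mon (e,0,0,e) z2"
    by (simp add: mon_comp z adj)
  then have "mon (e,0,0,e) (mon (e,0,0,e) z1) = mon (e,0,0,e) (mon (e,0,0,e) z2)" by simp
  moreover have "imat2_mult (e,0,0,e) (e,0,0,e) = (1,0,0,1)"
    by (simp add: imat2_mult_def ee)
  ultimately show ?thesis by (simp add: mon_comp z mon_id)
qed

lemma finite_roots1:
  assumes "m \<ge> 1" shows "finite {x::'k::idom. x ^ m = 1}"
proof -
  have ne: "monom (1::'k) m - 1 \<noteq> 0"
  proof
    assume "monom (1::'k) m - 1 = 0"
    then have "coeff (monom (1::'k) m - 1) m = 0" by simp
    then show False using assms by (simp add: coeff_monom)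
  qed
  have "{x::'k. x ^ m = 1} = {x. poly (monom 1 m - 1) x = 0}"
    by (simp add: poly_monom)
  then show ?thesis using poly_roots_finite[OF ne] by simp
qed

lemma pow_root1:
  fixes x :: "'k::field"
  assumes "x ^ m = 1" shows "(x powi a) ^ m = 1"
proof -
  have "(x powi a) ^ m = (x powi a) powi int m" by simp
  also have "\<dots> = x powi (a * int m)" by (rule power_int_mult[symmetric])
  also have "\<dots> = x powi (int m * a)" by (simp add: mult.commute)
  also have "\<dots> = (x powi int m) powi a" by (rule power_int_mult)
  also have "\<dots> = 1" using assms by simp
  finally show ?thesis .
qed

lemma tors_periodic:
  fixes z :: "'k::field \<times> 'k"
  assumes det: "\<bar>imat2_det B\<bar> = 1" and z: "z \<in> tors"
  shows "\<exists>j\<ge>1. mon (imat2_pow B j) z = z"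
proof -
  obtain m where m: "m \<ge> 1" "fst z ^ m = 1" "snd z ^ m = 1" and zt: "z \<in> torus"
    using z unfolding tors_def by auto
  define S where "S = {w::'k \<times> 'k. w \<in> torus \<and> fst w ^ m = 1 \<and> snd w ^ m = 1}"
  have finS: "finite S"
    by (rule finite_subset[of _ "{x::'k. x ^ m = 1} \<times> {x::'k. x ^ m = 1}"])
       (auto simp: S_def finite_roots1[OF m(1)])
  have monS: "mon C w \<in> S" if "w \<in> S" for C w
  proof -
    obtain a b c d where C: "C = (a,b,c,d)" by (cases C) auto
    obtain x y where w: "w = (x,y)" by (cases w) auto
    show ?thesis using that mon_torus[of w C] pow_root1[of x m] pow_root1[of y m]
      by (simp add: S_def C w mon_simp power_mult_distrib)
  qed
  have zS: "z \<in> S" using m zt by (simp add: S_def)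
  define w where "w i = mon (imat2_pow B i) z" for i
  have "w i \<in> S" for i unfolding w_def by (rule monS[OF zS])
  then have "w ` {..card S} \<subseteq> S" by blast
  then have "card (w ` {..card S}) \<le> card S" using finS by (rule card_mono[rotated])
  then have "card (w ` {..card S}) < card {..card S}" by simp
  then have "\<not> inj_on w {..card S}" by (rule pigeonhole)
  then obtain i j where ij: "i \<noteq> j" "w i = w j" unfolding inj_on_def by blast
  have main: "\<exists>j\<ge>1. mon (imat2_pow B j) z = z" if ij: "i < j" "w i = w j" for i j
  proof (intro exI conjI)
    show "j - i \<ge> 1" using ij by simp
    have "w j = mon (imat2_mult (imat2_pow B i) (imat2_pow B (j - i))) z"
      using ij by (simp add: w_def pow_add[symmetric])
    also have "\<dots> = mon (imat2_pow B i) (mon (imat2_pow B (j - i)) z)"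
      by (simp add: mon_comp zt)
    finally have "mon (imat2_pow B i) z = mon (imat2_pow B i) (mon (imat2_pow B (j - i)) z)"
      using ij by (simp add: w_def)
    moreover have "\<bar>imat2_det (imat2_pow B i)\<bar> = 1" using det by (simp add: det_pow power_abs)
    ultimately show "mon (imat2_pow B (j - i)) z = z"
      using mon_inj zt mon_torus by metis
  qed
  show ?thesis
  proof (cases "i < j")
    case True then show ?thesis using main ij by blast
  next
    case False then have "j < i" using ij by simp
    then show ?thesis using main ij by metis
  qed
qed



lemma funpow_fix: "g x = x \<Longrightarrow> (g ^^ j) x = x"
  by (induction j) auto

lemma tmul_cancel: "p \<in> torus \<Longrightarrow> tmul p z = tmul p w \<Longrightarrow> z = w"
  by (cases p; cases z; cases w) auto

lemma per_char:
  fixes \<alpha> \<beta> :: "'k::field"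
  assumes aut: "is_torus_aut \<alpha> \<beta> M" and tr: "tr2 (imat2_pow M 2) \<ge> 3"
    and p: "p \<in> torus" and n: "n \<ge> 1" and fixp: "(tmap \<alpha> \<beta> M ^^ n) p = p"
  shows "Per (tmap \<alpha> \<beta> M) = {tmul p z | z. z \<in> tors}"
proof -
  define f where "f = tmap \<alpha> \<beta> M"
  have ab: "\<alpha> \<noteq> 0" "\<beta> \<noteq> 0" and det: "\<bar>imat2_det M\<bar> = 1" using aut by (auto simp: is_torus_aut_def)
  have detN: "imat2_det (imat2_pow M 2) = 1"
  proof -
    have "imat2_det M ^ 2 = \<bar>imat2_det M\<bar> ^ 2" by simp
    then show ?thesis using det by (simp add: det_pow)
  qed
  have fixpj: "(f ^^ (n * j)) p = p" for j
    using funpow_fix[of "f ^^ n" p j] fixp by (simp add: funpow_mult f_def)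
  show ?thesis
  proof (intro equalityI subsetI)
    fix q assume "q \<in> Per (tmap \<alpha> \<beta> M)"
    then obtain m where q: "q \<in> torus" "m \<ge> 1" "(f ^^ m) q = q" by (auto simp: Per_def f_def)
    define k where "k = n * m"
    have k1: "k \<ge> 1" using n q(2) by (simp add: k_def)
    have fq: "(f ^^ (2 * k)) q = q"
      using funpow_fix[of "f ^^ m" q "2 * n"] q(3) by (simp add: funpow_mult k_def algebra_simps)
    have fp: "(f ^^ (2 * k)) p = p" using fixpj[of "2 * m"] by (simp add: k_def algebra_simps)
    obtain c where c: "c \<in> torus" "\<forall>p\<in>torus. (f ^^ (2 * k)) p = tmul c (mon (imat2_pow M (2 * k)) p)"
      using iterate[OF ab, where M=M and n="2 * k"] f_def by blast
    define A where "A = imat2_pow M (2 * k)"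
    obtain a b c' d where A: "A = (a,b,c',d)" by (cases A) auto
    have Dn: "(a - 1) * (d - 1) - b * c' \<noteq> 0"
      using nonsing_pow[OF detN tr k1] A unfolding A_def pow_mult by blast
    obtain x y u v where pq: "p = (x,y)" "q = (u,v)" by (cases p; cases q) auto
    define z where "z = (u / x, v / y)"
    have zt: "z \<in> torus" using p q pq by (simp add: z_def)
    have qz: "q = tmul p z" using p pq by (simp add: z_def)
    have "tmul p z = tmul c (mon A (tmul p z))" using c(2) q(1) fq qz A_def by simp
    also have "\<dots> = tmul (tmul c (mon A p)) (mon A z)" by (simp add: mon_mul tmul_assoc)
    also have "\<dots> = tmul p (mon A z)" using c(2) p fp A_def by simp
    finally have "mon A z = z" using tmul_cancel[OF p] by metis
    then have "z \<in> tors" using tors_of_fixed[OF zt _ Dn] A by simp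
    then show "q \<in> {tmul p z | z. z \<in> tors}" using qz by blast
  next
    fix q assume "q \<in> {tmul p z | z. z \<in> tors}"
    then obtain z where z: "z \<in> tors" and qz: "q = tmul p z" by blast
    have zt: "z \<in> torus" using z by (simp add: tors_def)
    have qt: "q \<in> torus" using qz p zt by (simp add: tmul_torus)
    have detB: "\<bar>imat2_det (imat2_pow M n)\<bar> = 1" using det by (simp add: det_pow power_abs)
    obtain j where j: "j \<ge> 1" "mon (imat2_pow (imat2_pow M n) j) z = z"
      using tors_periodic[OF detB z] by blast
    obtain c where c: "c \<in> torus" "\<forall>p\<in>torus. (f ^^ (n * j)) p = tmul c (mon (imat2_pow M (n * j)) p)"
      using iterate[OF ab, where M=M and n="n * j"] f_def by blast
    define A where "A = imat2_pow M (n * j)"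
    have "(f ^^ (n * j)) q = tmul c (mon A (tmul p z))" using c qt qz A_def by simp
    also have "\<dots> = tmul (tmul c (mon A p)) (mon A z)" by (simp add: mon_mul tmul_assoc)
    also have "\<dots> = tmul p (mon A z)" using c(2) p fixpj[of j] A_def by simp
    also have "\<dots> = q" using j(2) qz by (simp add: A_def pow_mult)
    finally have "(f ^^ (n * j)) q = q" .
    moreover have "n * j \<ge> 1" using n j by simp
    ultimately show "q \<in> Per (tmap \<alpha> \<beta> M)" using qt unfolding Per_def f_def by blast
  qed
qed

lemma root_int:
  fixes u :: "'k::alg_closed_field"
  assumes n: "n \<noteq> 0" and u: "u \<noteq> 0"
  shows "\<exists>X. X \<noteq> 0 \<and> X powi n = u"
proof (cases "n > 0")
  case True
  obtain y :: 'k where y: "y ^ nat n = u" using nth_root_exists[of "nat n" u] True by auto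
  have "y \<noteq> 0" using y u True by auto
  then show ?thesis using y True by (intro exI[of _ y]) (simp add: power_int_def)
next
  case False
  obtain y :: 'k where y: "y ^ nat (- n) = inverse u" using nth_root_exists[of "nat (-n)" "inverse u"] False n by auto
  have k0: "nat (- n) > 0" using False n by simp
  have "y ^ nat (- n) \<noteq> 0" using y u by simp
  then have "y \<noteq> 0" using k0 by (cases "y = 0") auto
  then show ?thesis using y False u n by (intro exI[of _ y]) (simp add: power_int_def power_inverse)
qed

lemma powi_comb:
  fixes X Y :: "'k::field"
  assumes "X \<noteq> 0" "Y \<noteq> 0"
  shows "(X powi i * Y powi j) powi k * (X powi i' * Y powi j') powi k'
       = X powi (i * k + i' * k') * Y powi (j * k + j' * k')"
proof -
  have "(X powi i * Y powi j) powi k * (X powi i' * Y powi j') powi k'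
      = (X powi (i * k) * X powi (i' * k')) * (Y powi (j * k) * Y powi (j' * k'))"
    by (simp add: power_int_mult_distrib pi_pi algebra_simps)
  also have "\<dots> = X powi (i * k + i' * k') * Y powi (j * k + j' * k')"
    using assms by (simp add: pi_add)
  finally show ?thesis .
qed

lemma solve:
  fixes u1 u2 :: "'k::alg_closed_field"
  assumes D: "a * d - b * c \<noteq> 0" and u: "u1 \<noteq> 0" "u2 \<noteq> 0"
  shows "\<exists>x y. x \<noteq> 0 \<and> y \<noteq> 0 \<and> x powi a * y powi b = u1 \<and> x powi c * y powi d = u2"
proof -
  define g where "g = gcd a b"
  have g0: "g \<noteq> 0" using D by (auto simp: g_def)
  obtain s t where st: "s * a + t * b = g" using bezout_int[of a b] g_def by blast
  have "g dvd a" "g dvd b" by (simp_all add: g_def)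
  then obtain a1 b1 where a1: "a = g * a1" and b1: "b = g * b1" by (auto elim!: dvdE)
  define E where "E = a1 * d - b1 * c"
  have "a * d - b * c = g * E" by (simp add: a1 b1 E_def algebra_simps)
  then have E0: "E \<noteq> 0" using D by auto
  obtain X :: 'k where X: "X \<noteq> 0" "X powi g = u1" using root_int[OF g0 u(1)] by blast
  have "u2 / X powi (s * c + t * d) \<noteq> 0" using X u by simp
  then obtain Y :: 'k where Y: "Y \<noteq> 0" "Y powi E = u2 / X powi (s * c + t * d)"
    using root_int[OF E0] by blast
  define x where "x = X powi s * Y powi (- b1)"
  define y where "y = X powi t * Y powi a1"
  have "x powi a * y powi b = X powi (s * a + t * b) * Y powi (- b1 * a + a1 * b)"
    unfolding x_def y_def by (rule powi_comb[OF X(1) Y(1)])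
  also have "\<dots> = u1" using st X by (simp add: a1 b1 algebra_simps)
  finally have 1: "x powi a * y powi b = u1" .
  have "x powi c * y powi d = X powi (s * c + t * d) * Y powi (- b1 * c + a1 * d)"
    unfolding x_def y_def by (rule powi_comb[OF X(1) Y(1)])
  also have "\<dots> = X powi (s * c + t * d) * Y powi E" by (simp add: E_def algebra_simps)
  also have "\<dots> = u2" using Y X by simp
  finally have 2: "x powi c * y powi d = u2" .
  have "x \<noteq> 0" "y \<noteq> 0" using X Y by (simp_all add: x_def y_def)
  then show ?thesis using 1 2 by blast
qed

lemma exist_per:
  fixes \<alpha> \<beta> :: "'k::alg_closed_field"
  assumes aut: "is_torus_aut \<alpha> \<beta> M" and tr: "tr2 (imat2_pow M 2) \<ge> 3"
  shows "\<exists>p. p \<in> torus \<and> (tmap \<alpha> \<beta> M ^^ 2) p = p"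
proof -
  have ab: "\<alpha> \<noteq> 0" "\<beta> \<noteq> 0" and det: "\<bar>imat2_det M\<bar> = 1" using aut by (auto simp: is_torus_aut_def)
  have detN: "imat2_det (imat2_pow M 2) = 1"
  proof -
    have "imat2_det M ^ 2 = \<bar>imat2_det M\<bar> ^ 2" by simp
    then show ?thesis using det by (simp add: det_pow)
  qed
  obtain a b c d where N: "imat2_pow M 2 = (a,b,c,d)" by (cases "imat2_pow M 2") auto
  have Dn: "(a - 1) * (d - 1) - b * c \<noteq> 0"
    using nonsing_pow[OF detN tr, of 1] N by (simp add: pow_Suc)
  obtain c0 where c0: "c0 \<in> torus" "\<forall>p\<in>torus. (tmap \<alpha> \<beta> M ^^ 2) p = tmul c0 (mon (imat2_pow M 2) p)"
    using iterate[OF ab, where M=M and n=2] by blast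
  obtain c1 c2 where cc: "c0 = (c1, c2)" by (cases c0) auto
  have c12: "c1 \<noteq> 0" "c2 \<noteq> 0" using c0 cc by auto
  obtain x y :: 'k where xy: "x \<noteq> 0" "y \<noteq> 0" "x powi (a - 1) * y powi b = inverse c1"
      "x powi c * y powi (d - 1) = inverse c2"
    using solve[OF Dn, of "inverse c1" "inverse c2"] c12 by auto
  have "x powi a = x * x powi (a - 1)" using xy(1) power_int_add[of x 1 "a - 1"] by simp
  moreover have "y powi d = y * y powi (d - 1)" using xy(2) power_int_add[of y 1 "d - 1"] by simp
  ultimately have "mon (imat2_pow M 2) (x, y) = (x * inverse c1, y * inverse c2)"
    using xy by (simp add: N mon_simp algebra_simps)
  then have "(tmap \<alpha> \<beta> M ^^ 2) (x, y) = (x, y)"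
    using c0(2) xy cc c12 by simp
  then show ?thesis using xy by auto
qed

theorem proposition8p1:
  fixes \<alpha> \<beta> \<gamma> \<delta> :: "'k::alg_closed_field"
    and M N :: imat2
  assumes "is_torus_aut \<alpha> \<beta> M" and "is_torus_aut \<gamma> \<delta> N"
    and "loxodromic M" and "loxodromic N"
  shows "Per (tmap \<alpha> \<beta> M) \<inter> Per (tmap \<gamma> \<delta> N) \<noteq> {}
         \<longleftrightarrow> Per (tmap \<alpha> \<beta> M) = Per (tmap \<gamma> \<delta> N)"
proof -
  have trM: "tr2 (imat2_pow M 2) \<ge> 3"
    using lox_tr assms(1,3) by (auto simp: is_torus_aut_def)
  have trN: "tr2 (imat2_pow N 2) \<ge> 3"
    using lox_tr assms(2,4) by (auto simp: is_torus_aut_def)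
  show ?thesis
  proof
    assume "Per (tmap \<alpha> \<beta> M) \<inter> Per (tmap \<gamma> \<delta> N) \<noteq> {}"
    then obtain p where p: "p \<in> Per (tmap \<alpha> \<beta> M)" "p \<in> Per (tmap \<gamma> \<delta> N)" by blast
    obtain n where n: "p \<in> torus" "n \<ge> 1" "(tmap \<alpha> \<beta> M ^^ n) p = p" using p(1) by (auto simp: Per_def)
    obtain m where m: "m \<ge> 1" "(tmap \<gamma> \<delta> N ^^ m) p = p" using p(2) by (auto simp: Per_def)
    show "Per (tmap \<alpha> \<beta> M) = Per (tmap \<gamma> \<delta> N)"
      using per_char[OF assms(1) trM n] per_char[OF assms(2) trN n(1) m] by simp
  next
    assume eq: "Per (tmap \<alpha> \<beta> M) = Per (tmap \<gamma> \<delta> N)"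
    obtain p where "p \<in> torus" "(tmap \<alpha> \<beta> M ^^ 2) p = p" using exist_per[OF assms(1) trM] by blast
    then have "p \<in> Per (tmap \<alpha> \<beta> M)" unfolding Per_def by (intro CollectI conjI exI[of _ 2]) auto
    then show "Per (tmap \<alpha> \<beta> M) \<inter> Per (tmap \<gamma> \<delta> N) \<noteq> {}" using eq by blast
  qed
qed

end
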